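(* Let $x,y \in \mathbb{N}$, let $S$ be a finite set of functions $f_i(z) = a_i z + b_i$ ($1 \le i \le N$) with $a_i, b_i \in \mathbb{Z}$ and $a_i > 0$, let $k > 0$ be an integer and $g(z) = z - k$, and put $F = S \cup \{g\}$. Then $x \xrightarrow{F}_+ y$ if and only if there exists $z \in \mathbb{Z}$ with $z \ge y$, $z \equiv y \pmod k$, and $x \xrightarrow{S}_+ z$.
   Context: $\mathbb{N} = \{0,1,2,\dots\}$. For a set $S$ of affine functions $\mathbb{Z}\to\mathbb{Z}$, an $S$-composition is a finite tuple $(s_1,\dots,s_K)$ with $K \ge 0$ and each $s_i \in S$, identified with the function $s_K \circ \dots \circ s_1$. Its orbit at $x$ is $\{x, s_1(x), (s_2\circ s_1)(x), \dots, (s_K\circ\dots\circ s_1)(x)\}$. The composition is valid with respect to $x$ if every element of its orbit at $x$ is nonnegative. We write $x \xrightarrow{S}_+ y$ if there is an $S$-composition $G$ valid with respect to $x$ with $G(x) = y$. *)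

theory Defs
  imports Main "HOL-Number_Theory.Cong"
begin

text \<open>An S-composition is a list (s_1,...,s_K) of elements of S; it denotes s_K o ... o s_1.
  Applying it to x means applying s_1 first.\<close>

definition comp_apply :: "(int \<Rightarrow> int) list \<Rightarrow> int \<Rightarrow> int" where
  "comp_apply fs x = fold (\<lambda>f z. f z) fs x"

definition orbit :: "(int \<Rightarrow> int) list \<Rightarrow> int \<Rightarrow> int set" where
  "orbit fs x = {comp_apply (take i fs) x | i. i \<le> length fs}"

definition valid_comp :: "(int \<Rightarrow> int) list \<Rightarrow> int \<Rightarrow> bool" where
  "valid_comp fs x \<longleftrightarrow> (\<forall>v \<in> orbit fs x. v \<ge> 0)"

definition reach_pos :: "(int \<Rightarrow> int) set \<Rightarrow> int \<Rightarrow> int \<Rightarrow> bool" where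
  "reach_pos S x y \<longleftrightarrow> (\<exists>fs. set fs \<subseteq> S \<and> valid_comp fs x \<and> comp_apply fs x = y)"

end

theory Submission
  imports Defs
begin

lemma comp_snoc: "comp_apply (fs @ [h]) x = h (comp_apply fs x)"
  by (simp add: comp_apply_def)

lemma orbit_snoc: "orbit (fs @ [h]) x = insert (comp_apply (fs @ [h]) x) (orbit fs x)"
proof -
  have "orbit (fs @ [h]) x = {comp_apply (take i (fs@[h])) x | i. i \<le> Suc (length fs)}"
    by (simp add: orbit_def)
  also have "\<dots> = insert (comp_apply (fs @ [h]) x) {comp_apply (take i fs) x | i. i \<le> length fs}"
  proof (rule set_eqI, rule iffI)
    fix v assume "v \<in> {comp_apply (take i (fs@[h])) x | i. i \<le> Suc (length fs)}"
    then obtain i where i: "i \<le> Suc (length fs)" "v = comp_apply (take i (fs@[h])) x" by blast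
    show "v \<in> insert (comp_apply (fs @ [h]) x) {comp_apply (take i fs) x | i. i \<le> length fs}"
    proof (cases "i = Suc (length fs)")
      case True then show ?thesis using i by simp
    next
      case False then have "i \<le> length fs" using i by simp
      then show ?thesis using i by auto
    qed
  next
    fix v assume "v \<in> insert (comp_apply (fs @ [h]) x) {comp_apply (take i fs) x | i. i \<le> length fs}"
    then show "v \<in> {comp_apply (take i (fs@[h])) x | i. i \<le> Suc (length fs)}"
    proof
      assume "v = comp_apply (fs @ [h]) x"
      then have "v = comp_apply (take (Suc (length fs)) (fs@[h])) x" by simp
      then show ?thesis by blast
    next
      assume "v \<in> {comp_apply (take i fs) x | i. i \<le> length fs}"
      then obtain i where "i \<le> length fs" "v = comp_apply (take i fs) x" by blast
      then have "v = comp_apply (take i (fs@[h])) x" "i \<le> Suc (length fs)" by simp_all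
      then show ?thesis by blast
    qed
  qed
  finally show ?thesis by (simp add: orbit_def)
qed

lemma valid_snoc: "valid_comp (fs @ [h]) x \<longleftrightarrow> valid_comp fs x \<and> h (comp_apply fs x) \<ge> 0"
  by (auto simp: valid_comp_def orbit_snoc comp_snoc)

lemma valid_nil: "valid_comp [] x \<longleftrightarrow> x \<ge> 0"
  by (simp add: valid_comp_def orbit_def comp_apply_def)

lemma fwd:
  assumes S: "\<forall>f \<in> S. \<exists>a b. a > 0 \<and> f = (\<lambda>z. a * z + b)" and k: "k > 0"
  shows "set fs \<subseteq> insert (\<lambda>z. z - k) S \<Longrightarrow> valid_comp fs x \<Longrightarrow>
    \<exists>gs m. set gs \<subseteq> S \<and> valid_comp gs x \<and> comp_apply gs x = comp_apply fs x + m * k \<and> m \<ge> 0"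
proof (induction fs rule: rev_induct)
  case Nil then show ?case by (rule_tac x="[]" in exI, rule_tac x=0 in exI) simp
next
  case (snoc h fs)
  then have v: "valid_comp fs x" "h (comp_apply fs x) \<ge> 0" by (auto simp: valid_snoc)
  from snoc v obtain gs m where gs: "set gs \<subseteq> S" "valid_comp gs x"
    "comp_apply gs x = comp_apply fs x + m * k" "m \<ge> 0" by auto
  have "h = (\<lambda>z. z - k) \<or> h \<in> S" using snoc by auto
  then show ?case
  proof
    assume h: "h = (\<lambda>z. z - k)"
    show ?thesis using gs h by (rule_tac x=gs in exI, rule_tac x="m+1" in exI)
        (simp add: comp_snoc algebra_simps)
  next
    assume hS: "h \<in> S"
    then obtain a b where ab: "a > 0" "h = (\<lambda>z. a * z + b)" using S by blast
    have eq: "h (comp_apply gs x) = h (comp_apply fs x) + (a*m) * k"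
      using gs(3) ab by (simp add: algebra_simps)
    have am: "0 \<le> a*m" using ab gs by simp
    have "0 \<le> (a*m)*k" using am k by simp
    then show ?thesis using gs hS eq v am
      by (rule_tac x="gs@[h]" in exI, rule_tac x="a*m" in exI)
        (simp add: comp_snoc valid_snoc)
  qed
qed

lemma bwd:
  assumes k: "k > 0"
  shows "valid_comp fs x \<Longrightarrow> comp_apply fs x = y + int n * k \<Longrightarrow> y \<ge> 0 \<Longrightarrow>
    valid_comp (fs @ replicate n (\<lambda>z. z - k)) x \<and> comp_apply (fs @ replicate n (\<lambda>z. z - k)) x = y"
proof (induction n arbitrary: fs)
  case 0 then show ?case by simp
next
  case (Suc n)
  have e: "fs @ replicate (Suc n) (\<lambda>z. z - k) = (fs @ [\<lambda>z. z - k]) @ replicate n (\<lambda>z. z - k)"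
    by (simp add: replicate_app_Cons_same)
  have "valid_comp (fs @ [\<lambda>z. z - k]) x" using Suc.prems k
    by (simp add: valid_snoc algebra_simps)
  moreover have "comp_apply (fs @ [\<lambda>z. z - k]) x = y + int n * k" using Suc.prems
    by (simp add: comp_snoc algebra_simps)
  ultimately show ?case using Suc.IH[of "fs @ [\<lambda>z. z - k]"] Suc.prems e by simp
qed

theorem mainTheorem11:
  fixes x y k :: int and S :: "(int \<Rightarrow> int) set"
  assumes "x \<ge> 0" and "y \<ge> 0"
    and "finite S"
    and "\<forall>f \<in> S. \<exists>a b. a > 0 \<and> f = (\<lambda>z. a * z + b)"
    and "k > 0"
  shows "reach_pos (insert (\<lambda>z. z - k) S) x y \<longleftrightarrow>
         (\<exists>z. z \<ge> y \<and> [z = y] (mod k) \<and> reach_pos S x z)"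
proof
  assume "reach_pos (insert (\<lambda>z. z - k) S) x y"
  then obtain fs where fs: "set fs \<subseteq> insert (\<lambda>z. z - k) S" "valid_comp fs x" "comp_apply fs x = y"
    by (auto simp: reach_pos_def)
  from fwd[OF assms(4,5) fs(1,2)] obtain gs m where gs: "set gs \<subseteq> S" "valid_comp gs x"
    "comp_apply gs x = y + m * k" "m \<ge> 0" using fs(3) by auto
  have "[y + m*k = y] (mod k)" by (simp add: cong_def)
  moreover have "y + m*k \<ge> y" using gs(4) assms(5) by simp
  moreover have "reach_pos S x (y + m*k)" using gs by (auto simp: reach_pos_def)
  ultimately show "\<exists>z. z \<ge> y \<and> [z = y] (mod k) \<and> reach_pos S x z"
    by blast
next
  assume "\<exists>z. z \<ge> y \<and> [z = y] (mod k) \<and> reach_pos S x z"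
  then obtain z gs where z: "z \<ge> y" "[z = y] (mod k)" "set gs \<subseteq> S" "valid_comp gs x" "comp_apply gs x = z"
    by (auto simp: reach_pos_def)
  have "k dvd (z - y)" using z(2) by (simp add: cong_iff_dvd_diff)
  then obtain q where q: "z - y = k * q" by blast
  have "q \<ge> 0" using q z(1) assms(5) by (metis diff_ge_0_iff_ge zero_le_mult_iff not_less)
  then have "comp_apply gs x = y + int (nat q) * k" using q z(5) by (simp add: algebra_simps)
  from bwd[OF assms(5) z(4) this assms(2)] z(3) show "reach_pos (insert (\<lambda>z. z - k) S) x y"
    unfolding reach_pos_def by (rule_tac x="gs @ replicate (nat q) (\<lambda>z. z - k)" in exI) auto
qed

end
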